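(* Let $(S,\ast)$ be a countable adequate partial semigroup and let $A\subseteq S$. If there is an idempotent $p\in\overline{A}\cap J_\delta(S)$, then there is a decreasing sequence $\langle A_n\rangle_{n=1}^\infty$ of subsets of $A$ such that (i) for all $n\in\mathbb{N}$ and all $x\in A_n$ there exists $m\in\mathbb{N}$ with $A_m\subseteq x^{-1}A_n$; (ii) for all $n\in\mathbb{N}$, $A_n$ is a $J_\delta$-set.
   Context: A partial semigroup is a pair $(S,\ast)$ where $\ast$ is an operation defined on a subset of $S\times S$ such that $(x\ast y)\ast z=x\ast(y\ast z)$ in the sense that if either side is defined, so is the other and they are equal. $\phi_S(s)=\{t: s\ast t\text{ defined}\}$, $\sigma_S(H)=\bigcap_{s\in H}\phi_S(s)$ for $H\in\mathcal{P}_f(S)$; $S$ is adequate if all $\sigma_S(H)\ne\emptyset$. $\overline{A}=\{p\in\beta S: A\in p\}$. $\delta S=\bigcap_{x\in S}\overline{\phi_S(x)}$, with operation $p\ast q=\{B\subseteq S:\{s: s^{-1}B\in q\}\in p\}$, where $s^{-1}B=\{t\in\phi_S(s): s\ast t\in B\}$. A sequence $\langle y_n\rangle$ in $S$ is adequate if $\prod_{n\in F}y_n$ is defined for every $F\in\mathcal{P}_f(\mathbb{N})$ and for every $K\in\mathcal{P}_f(S)$ there is $m$ with $\prod_{n\in F}y_n\in\sigma_S(K)$ whenever $\min F\ge m$; $\mathcal{T}_S$ is the set of adequate sequences. For $W\in\mathcal{P}_f(S)$, $a\in S$, $W\ast a=\{w\ast a: w\in W,\ w\ast a\text{ defined}\}$.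 $B\subseteq S$ is a $J_\delta$-set if for every $F\in\mathcal{P}_f(\mathcal{T}_S)$ and $W\in\mathcal{P}_f(S)$ there exist $a\in\sigma_S(W)$ and $H\in\mathcal{P}_f(\mathbb{N})$ with $\prod_{t\in H}f(t)\in\sigma_S(W\ast a)$ and $a\ast\prod_{t\in H}f(t)\in B$ for each $f\in F$; $J_\delta(S)=\{p\in\delta S:\text{every member of }p\text{ is a }J_\delta\text{-set}\}$. *)

theory Defs
  imports Main "HOL-Library.Countable_Set"
begin

text \<open>A partial semigroup on the carrier type 'a: the operation is
  op :: 'a => 'a => 'a option, with op x y = None meaning x * y undefined.\<close>

definition partial_semigroup :: "('a \<Rightarrow> 'a \<Rightarrow> 'a option) \<Rightarrow> bool" where
  "partial_semigroup op \<longleftrightarrow>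
     (\<forall>x y z. Option.bind (op x y) (\<lambda>u. op u z) = Option.bind (op y z) (\<lambda>v. op x v))"

definition phiS :: "('a \<Rightarrow> 'a \<Rightarrow> 'a option) \<Rightarrow> 'a \<Rightarrow> 'a set" where
  "phiS op s = {t. op s t \<noteq> None}"

definition sigmaS :: "('a \<Rightarrow> 'a \<Rightarrow> 'a option) \<Rightarrow> 'a set \<Rightarrow> 'a set" where
  "sigmaS op H = (\<Inter>s\<in>H. phiS op s)"

definition adequate :: "('a \<Rightarrow> 'a \<Rightarrow> 'a option) \<Rightarrow> bool" where
  "adequate op \<longleftrightarrow> (\<forall>H. finite H \<and> H \<noteq> {} \<longrightarrow> sigmaS op H \<noteq> {})"

definition is_ultrafilter :: "'a set set \<Rightarrow> bool" where
  "is_ultrafilter p \<longleftrightarrow> UNIV \<in> p \<and> {} \<notin> p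
     \<and> (\<forall>A B. A \<in> p \<and> A \<subseteq> B \<longrightarrow> B \<in> p)
     \<and> (\<forall>A B. A \<in> p \<and> B \<in> p \<longrightarrow> A \<inter> B \<in> p)
     \<and> (\<forall>A. A \<in> p \<or> - A \<in> p)"

definition deltaS :: "('a \<Rightarrow> 'a \<Rightarrow> 'a option) \<Rightarrow> 'a set set set" where
  "deltaS op = {p. is_ultrafilter p \<and> (\<forall>x. phiS op x \<in> p)}"

definition linv :: "('a \<Rightarrow> 'a \<Rightarrow> 'a option) \<Rightarrow> 'a \<Rightarrow> 'a set \<Rightarrow> 'a set" where
  "linv op s B = {t. t \<in> phiS op s \<and> the (op s t) \<in> B}"

definition uprod :: "('a \<Rightarrow> 'a \<Rightarrow> 'a option) \<Rightarrow> 'a set set \<Rightarrow> 'a set set \<Rightarrow> 'a set set" where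
  "uprod op p q = {B. {s. linv op s B \<in> q} \<in> p}"

fun lprod :: "('a \<Rightarrow> 'a \<Rightarrow> 'a option) \<Rightarrow> 'a list \<Rightarrow> 'a option" where
  "lprod op [] = None"
| "lprod op [x] = Some x"
| "lprod op (x # xs) = Option.bind (lprod op xs) (\<lambda>v. op x v)"

definition fprod :: "('a \<Rightarrow> 'a \<Rightarrow> 'a option) \<Rightarrow> (nat \<Rightarrow> 'a) \<Rightarrow> nat set \<Rightarrow> 'a option" where
  "fprod op y F = lprod op (map y (sorted_list_of_set F))"

definition adequate_seq :: "('a \<Rightarrow> 'a \<Rightarrow> 'a option) \<Rightarrow> (nat \<Rightarrow> 'a) \<Rightarrow> bool" where
  "adequate_seq op y \<longleftrightarrow>
     (\<forall>F. finite F \<and> F \<noteq> {} \<longrightarrow> fprod op y F \<noteq> None)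
   \<and> (\<forall>K. finite K \<and> K \<noteq> {} \<longrightarrow>
        (\<exists>m. \<forall>F. finite F \<and> F \<noteq> {} \<and> Min F \<ge> m \<longrightarrow> the (fprod op y F) \<in> sigmaS op K))"

definition rmult_set :: "('a \<Rightarrow> 'a \<Rightarrow> 'a option) \<Rightarrow> 'a set \<Rightarrow> 'a \<Rightarrow> 'a set" where
  "rmult_set op W a = {the (op w a) | w. w \<in> W \<and> op w a \<noteq> None}"

definition Jdelta_set :: "('a \<Rightarrow> 'a \<Rightarrow> 'a option) \<Rightarrow> 'a set \<Rightarrow> bool" where
  "Jdelta_set op B \<longleftrightarrow>
     (\<forall>F W. finite F \<and> F \<noteq> {} \<and> (\<forall>f\<in>F. adequate_seq op f) \<and> finite W \<and> W \<noteq> {} \<longrightarrow>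
        (\<exists>a \<in> sigmaS op W. \<exists>H. finite H \<and> H \<noteq> {} \<and>
           (\<forall>f\<in>F. fprod op f H \<noteq> None \<and> the (fprod op f H) \<in> sigmaS op (rmult_set op W a)
                  \<and> op a (the (fprod op f H)) \<noteq> None \<and> the (op a (the (fprod op f H))) \<in> B)))"

definition Jdelta :: "('a \<Rightarrow> 'a \<Rightarrow> 'a option) \<Rightarrow> 'a set set set" where
  "Jdelta op = {p \<in> deltaS op. \<forall>B\<in>p. Jdelta_set op B}"

end

theory Submission
  imports Defs
begin

definition starS :: "('a \<Rightarrow> 'a \<Rightarrow> 'a option) \<Rightarrow> 'a set set \<Rightarrow> 'a set \<Rightarrow> 'a set" where
  "starS op p B = {x \<in> B. linv op x B \<in> p}"

lemma linv_linv:
  assumes "partial_semigroup op" "op x y = Some z"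
  shows "linv op y (linv op x B) = linv op z B"
proof -
  have "\<And>t. op z t = (case op y t of None \<Rightarrow> None | Some v \<Rightarrow> op x v)"
  proof -
    fix t
    have "Option.bind (op x y) (\<lambda>u. op u t) = Option.bind (op y t) (\<lambda>v. op x v)"
      using assms(1) unfolding partial_semigroup_def by blast
    then show "op z t = (case op y t of None \<Rightarrow> None | Some v \<Rightarrow> op x v)"
      using assms(2) by (cases "op y t") auto
  qed
  then show ?thesis unfolding linv_def phiS_def
    by (auto split: option.splits)
qed

lemma uf_int:
  assumes "is_ultrafilter p" "A \<in> p" "B \<in> p" shows "A \<inter> B \<in> p"
  using assms unfolding is_ultrafilter_def by blast

lemma uf_mono:
  assumes "is_ultrafilter p" "A \<in> p" "A \<subseteq> B" shows "B \<in> p"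
  using assms unfolding is_ultrafilter_def by blast

lemma uf_fin_int:
  assumes "is_ultrafilter p" "finite F" "\<forall>X\<in>F. X \<in> p" "B \<in> p"
  shows "B \<inter> \<Inter>F \<in> p"
  using assms(2,3)
proof (induction F rule: finite_induct)
  case empty
  then show ?case using assms by simp
next
  case (insert X F)
  have "X \<inter> (B \<inter> \<Inter>F) \<in> p" using insert uf_int[OF assms(1)] by simp
  moreover have "X \<inter> (B \<inter> \<Inter>F) = B \<inter> \<Inter>(insert X F)" by auto
  ultimately show ?case by simp
qed

lemma star_props:
  assumes ps: "partial_semigroup op" and pd: "p \<in> deltaS op" and idem: "uprod op p p = p"
    and B: "B \<in> p"
  shows "starS op p B \<in> p" "starS op p B \<subseteq> B" "\<forall>x\<in>starS op p B. linv op x (starS op p B) \<in> p"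
proof -
  have uf: "is_ultrafilter p" and phi: "\<And>x. phiS op x \<in> p" using pd unfolding deltaS_def by auto
  have key: "\<And>C. C \<in> p \<Longrightarrow> {s. linv op s C \<in> p} \<in> p"
    using idem unfolding uprod_def by (metis (no_types, lifting) mem_Collect_eq)
  have eq: "starS op p B = B \<inter> {s. linv op s B \<in> p}" unfolding starS_def by auto
  show "starS op p B \<in> p" using eq uf_int[OF uf B key[OF B]] by simp
  show "starS op p B \<subseteq> B" unfolding starS_def by auto
  show "\<forall>x\<in>starS op p B. linv op x (starS op p B) \<in> p"
  proof
    fix x assume x: "x \<in> starS op p B"
    then have xB: "linv op x B \<in> p" unfolding starS_def by auto
    have s1: "phiS op x \<inter> {y. linv op y (linv op x B) \<in> p} \<in> p"
      using uf_int[OF uf phi key[OF xB]] .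
    have "phiS op x \<inter> {y. linv op y (linv op x B) \<in> p} \<subseteq> linv op x {s. linv op s B \<in> p}"
    proof
      fix y assume y: "y \<in> phiS op x \<inter> {y. linv op y (linv op x B) \<in> p}"
      then obtain z where z: "op x y = Some z" unfolding phiS_def by auto
      then have "linv op y (linv op x B) = linv op z B" using linv_linv[OF ps] by blast
      then show "y \<in> linv op x {s. linv op s B \<in> p}" using y z unfolding linv_def by auto
    qed
    then have s2: "linv op x {s. linv op s B \<in> p} \<in> p" using uf_mono[OF uf s1] by blast
    have "linv op x (starS op p B) = linv op x B \<inter> linv op x {s. linv op s B \<in> p}"
      unfolding eq linv_def by auto
    then show "linv op x (starS op p B) \<in> p" using uf_int[OF uf xB s2] by simp
  qed
qed

definition stepS :: "('a \<Rightarrow> 'a \<Rightarrow> 'a option) \<Rightarrow> 'a set set \<Rightarrow> (nat \<Rightarrow> 'a) \<Rightarrow> 'a set list \<Rightarrow> 'a set" where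
  "stepS op p e L = starS op p (last L \<inter> \<Inter>{linv op (e i) (L!j) | i j. i < length L \<and> j < length L
       \<and> e i \<in> L!j \<and> linv op (e i) (L!j) \<in> p})"

primrec GS :: "('a \<Rightarrow> 'a \<Rightarrow> 'a option) \<Rightarrow> 'a set set \<Rightarrow> (nat \<Rightarrow> 'a) \<Rightarrow> 'a set \<Rightarrow> nat \<Rightarrow> 'a set list" where
  "GS op p e A 0 = [starS op p A]"
| "GS op p e A (Suc k) = GS op p e A k @ [stepS op p e (GS op p e A k)]"

lemma GS_len: "length (GS op p e A k) = Suc k"
  by (induction k) auto

lemma GS_nth: "j \<le> k \<Longrightarrow> GS op p e A k ! j = GS op p e A j ! j"
proof (induction k)
  case 0 then show ?case by simp
next
  case (Suc k)
  show ?case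
  proof (cases "j = Suc k")
    case True then show ?thesis by simp
  next
    case False
    then have "j \<le> k" using Suc.prems by simp
    then show ?thesis using Suc.IH by (simp add: nth_append GS_len)
  qed
qed

lemma GS_last: "last (GS op p e A k) = GS op p e A k ! k"
proof -
  have "GS op p e A k \<noteq> []" using GS_len[of op p e A k] by auto
  then show ?thesis by (simp add: last_conv_nth GS_len)
qed

theorem corollary4p5:
  fixes op :: "'a \<Rightarrow> 'a \<Rightarrow> 'a option" and A :: "'a set" and p :: "'a set set"
  assumes "partial_semigroup op"
    and "countable (UNIV :: 'a set)"
    and "adequate op"
    and "p \<in> Jdelta op"
    and "uprod op p p = p"
    and "A \<in> p"
  shows "\<exists>An :: nat \<Rightarrow> 'a set.
           (\<forall>n. An (Suc n) \<subseteq> An n) \<and> (\<forall>n. An n \<subseteq> A)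
         \<and> (\<forall>n. \<forall>x\<in>An n. \<exists>m. An m \<subseteq> linv op x (An n))
         \<and> (\<forall>n. Jdelta_set op (An n))"
proof -
  have pd: "p \<in> deltaS op" and pJ: "\<forall>B\<in>p. Jdelta_set op B" using assms(4) unfolding Jdelta_def by auto
  have uf: "is_ultrafilter p" using pd unfolding deltaS_def by auto
  define e where "e = from_nat_into (UNIV :: 'a set)"
  have esurj: "\<And>x. \<exists>i. e i = x" unfolding e_def
    by (metis UNIV_I UNIV_not_empty assms(2) from_nat_into_surj)
  define An where "An k = GS op p e A k ! k" for k
  have AnL: "An k = last (GS op p e A k)" for k unfolding An_def GS_last ..
  have AnSuc: "An (Suc k) = stepS op p e (GS op p e A k)" for k
    unfolding An_def by (simp add: nth_append GS_len)
  have Q: "\<exists>C\<in>p. An k = starS op p C" for k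
  proof (induction k)
    case 0
    then show ?case using assms(6) unfolding An_def by auto
  next
    case (Suc k')
    let ?L = "GS op p e A k'"
    let ?F = "{linv op (e i) (?L!j) | i j. i < length ?L \<and> j < length ?L
       \<and> e i \<in> ?L!j \<and> linv op (e i) (?L!j) \<in> p}"
    have fin: "finite ?F"
    proof (rule finite_subset)
      show "?F \<subseteq> (\<lambda>(i,j). linv op (e i) (?L!j)) ` ({..<length ?L} \<times> {..<length ?L})" by auto
    qed auto
    have "last ?L \<in> p" using Suc.IH star_props[OF assms(1) pd assms(5)] AnL[of k'] by metis
    then have "last ?L \<inter> \<Inter>?F \<in> p" using uf_fin_int[OF uf fin] by blast
    then show ?case unfolding AnSuc stepS_def by blast
  qed
  have P: "An k \<in> p \<and> (\<forall>x\<in>An k. linv op x (An k) \<in> p)" for k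
    using Q[of k] star_props[OF assms(1) pd assms(5)] by metis
  have dec: "An (Suc k) \<subseteq> An k" for k
    unfolding AnSuc stepS_def AnL[of k] starS_def by auto
  have subA: "An k \<subseteq> A" for k
  proof (induction k)
    case 0 then show ?case using star_props(2)[OF assms(1) pd assms(5) assms(6)] by (simp add: An_def)
  next
    case (Suc k) then show ?case using dec by blast
  qed
  have iii: "\<exists>m. An m \<subseteq> linv op x (An n)" if x: "x \<in> An n" for n x
  proof -
    obtain i where i: "e i = x" using esurj by blast
    let ?k = "max i n"
    let ?L = "GS op p e A ?k"
    have nth: "?L ! n = An n" unfolding An_def by (rule GS_nth) simp
    have mem: "linv op (e i) (?L!n) \<in> {linv op (e i) (?L!j) | i j. i < length ?L \<and> j < length ?L
       \<and> e i \<in> ?L!j \<and> linv op (e i) (?L!j) \<in> p}"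
      proof -
      have "i < length ?L" "n < length ?L" using GS_len[of op p e A ?k] by auto
      moreover have "e i \<in> ?L!n" "linv op (e i) (?L!n) \<in> p" using x i P[of n] nth by auto
      ultimately show ?thesis by blast
    qed
    have "An (Suc ?k) \<subseteq> linv op (e i) (?L!n)"
      unfolding AnSuc stepS_def starS_def using mem by blast
    then show ?thesis using nth i by metis
  qed
  show ?thesis
  proof (rule exI[of _ An], intro conjI allI ballI)
    fix n show "An (Suc n) \<subseteq> An n" by (rule dec)
  next
    fix n show "An n \<subseteq> A" by (rule subA)
  next
    fix n x assume "x \<in> An n" then show "\<exists>m. An m \<subseteq> linv op x (An n)" by (rule iii)
  next
    fix n show "Jdelta_set op (An n)" using P[of n] pJ by blast
  qed
qed

end
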